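(* Let $\alpha<0$, let $f=(1-\alpha\varphi)^{1/\alpha}\in\mathcal{C}^+_\alpha(\mathbb{R}^n)$, let $0\le l<n$ and $p\ge 0$. If $-\frac{1}{n-l+p}<\alpha$, then $$\int_{\mathbb{R}^n}|x|^p\,\big(1-\alpha\varphi(x)\big)^{\frac1\alpha-l}\,dx<+\infty .$$ In particular, if $-\frac1n<\alpha<0$, then $\int_{\mathbb{R}^n}f(x)\,dx<+\infty$ and $\int_{\mathbb{R}^n}f(x)^{1-\alpha}\,dx<+\infty$.
   Context: $\mathrm{Conv}(\mathbb{R}^n)$ denotes the set of proper, convex, lower semi-continuous functions $\varphi:\mathbb{R}^n\to\mathbb{R}\cup\{+\infty\}$. A function $\varphi$ is coercive if $\liminf_{|x|\to\infty}\varphi(x)/|x|>0$. For $\alpha<0$, $\mathcal{C}^+_\alpha(\mathbb{R}^n)$ is the set of functions $f=(1-\alpha\varphi)^{1/\alpha}$ where $\varphi\in\mathrm{Conv}(\mathbb{R}^n)$ is nonnegative and coercive ($\varphi$ is called the base of $f$), with the convention that $f(x)=0$ (and $(1-\alpha\varphi(x))^{s}=0$ for $s<0$) when $\varphi(x)=+\infty$. *)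

theory Defs
  imports "HOL-Analysis.Analysis"
begin

text \<open>Functions R^n -> R \<union> {+\<infinity>} are modelled as maps into ereal that never take -\<infinity>.\<close>

definition lsc_ereal :: "('a::topological_space \<Rightarrow> ereal) \<Rightarrow> bool" where
  "lsc_ereal \<phi> \<longleftrightarrow> (\<forall>x. \<phi> x \<le> Liminf (at x) \<phi>)"

definition convex_ereal :: "('a::real_vector \<Rightarrow> ereal) \<Rightarrow> bool" where
  "convex_ereal \<phi> \<longleftrightarrow>
     (\<forall>x y t. 0 < t \<and> t < 1 \<longrightarrow>
        \<phi> (t *\<^sub>R x + (1 - t) *\<^sub>R y) \<le> ereal t * \<phi> x + ereal (1 - t) * \<phi> y)"

definition Conv :: "('a::real_normed_vector \<Rightarrow> ereal) set" where
  "Conv = {\<phi>. (\<exists>x. \<phi> x \<noteq> \<infinity>) \<and> (\<forall>x. \<phi> x \<noteq> -\<infinity>) \<and> convex_ereal \<phi> \<and> lsc_ereal \<phi>}"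

definition coercive :: "('a::real_normed_vector \<Rightarrow> ereal) \<Rightarrow> bool" where
  "coercive \<phi> \<longleftrightarrow> Liminf at_infinity (\<lambda>x. \<phi> x / ereal (norm x)) > 0"

text \<open>Admissible bases of functions in C^+_\<alpha>: nonnegative coercive elements of Conv.\<close>
definition base_C_plus :: "('a::real_normed_vector \<Rightarrow> ereal) set" where
  "base_C_plus = {\<phi>. \<phi> \<in> Conv \<and> (\<forall>x. 0 \<le> \<phi> x) \<and> coercive \<phi>}"

text \<open>(1 - \<alpha> v)^s with the convention that it is 0 when v = +\<infinity>
  (only used for exponents s < 0, where this is the paper's convention).\<close>
definition pow_base :: "real \<Rightarrow> ereal \<Rightarrow> real \<Rightarrow> real" where
  "pow_base \<alpha> v s = (if v = \<infinity> then 0 else (1 - \<alpha> * real_of_ereal v) powr s)"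

definition f_alpha :: "real \<Rightarrow> ('a \<Rightarrow> ereal) \<Rightarrow> 'a \<Rightarrow> real" where
  "f_alpha \<alpha> \<phi> x = pow_base \<alpha> (\<phi> x) (1 / \<alpha>)"

end

theory Submission
  imports Defs
begin

lemma ennreal_le_suminf_term: "(f::nat \<Rightarrow> ennreal) k \<le> suminf f"
  using sum_le_suminf[of f "{k}"] by (simp add: summableI)

lemma integrable_tail:
  fixes t :: real
  assumes t: "t > real DIM('a::euclidean_space)"
  shows "(\<integral>\<^sup>+x. ennreal ((1 + norm (x::'a)) powr (-t)) \<partial>lborel) < \<infinity>"
proof -
  define n where "n = DIM('a)"
  define V where "V = unit_ball_vol (real n)"
  have V: "V \<ge> 0" unfolding V_def by simp
  define g where "g = (\<lambda>k::nat. \<lambda>x::'a. ennreal (2 powr (-(real k)*t)) * indicator (ball 0 (2^(Suc k))) x)"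
  have tpos: "t > 0" using t by (smt (verit) of_nat_0_le_iff)
  have pt: "ennreal ((1 + norm x) powr (-t)) \<le> (\<Sum>k. g k x)" for x
  proof (cases "norm x < 2")
    case True
    have "1 \<le> (1 + norm x) powr t" using tpos by (intro ge_one_powr_ge_zero) auto
    hence "(1 + norm x) powr (-t) \<le> 1"
      by (simp add: powr_minus_divide divide_le_eq)
    hence "ennreal ((1 + norm x) powr (-t)) \<le> g 0 x" using True by (simp add: g_def indicator_def)
    also have "\<dots> \<le> (\<Sum>k. g k x)" by (rule ennreal_le_suminf_term)
    finally show ?thesis .
  next
    case False
    define k where "k = nat (floor (log 2 (norm x)))"
    have nx: "norm x \<ge> 2" using False by simp
    have lg: "log 2 (norm x) \<ge> 1" using nx by (subst le_log_iff) auto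
    have k1: "real k \<le> log 2 (norm x)" unfolding k_def using lg by linarith
    have k2: "log 2 (norm x) < real k + 1" unfolding k_def using lg by linarith
    have a1: "2 powr real k \<le> norm x"
    proof -
      have "2 powr real k \<le> 2 powr (log 2 (norm x))" using k1 by simp
      also have "\<dots> = norm x" using nx by (intro powr_log_cancel) auto
      finally show ?thesis .
    qed
    have a2: "norm x < 2 ^ Suc k"
    proof -
      have "norm x = 2 powr (log 2 (norm x))" using nx by (intro powr_log_cancel[symmetric]) auto
      also have "\<dots> < 2 powr (real k + 1)" using k2 by simp
      also have "\<dots> = 2 ^ Suc k" by (simp add: powr_realpow[symmetric] add.commute powr_add)
      finally show ?thesis .
    qed
    have "(1 + norm x) powr (-t) \<le> (norm x) powr (-t)"
      using nx tpos by (intro powr_mono2') auto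
    also have "\<dots> \<le> (2 powr real k) powr (-t)"
      using a1 tpos by (intro powr_mono2') auto
    also have "\<dots> = 2 powr (-(real k)*t)" by (simp add: powr_powr)
    finally have "ennreal ((1 + norm x) powr (-t)) \<le> g k x"
      using a2 by (simp add: g_def indicator_def ennreal_leI)
    also have "\<dots> \<le> (\<Sum>k. g k x)" by (rule ennreal_le_suminf_term)
    finally show ?thesis .
  qed
  have "(\<integral>\<^sup>+x. ennreal ((1 + norm (x::'a)) powr (-t)) \<partial>lborel) \<le> (\<integral>\<^sup>+x. (\<Sum>k. g k x) \<partial>lborel)"
    by (intro nn_integral_mono pt)
  also have "\<dots> = (\<Sum>k. \<integral>\<^sup>+x. g k x \<partial>lborel)"
    apply (rule nn_integral_suminf) unfolding g_def
    apply (intro borel_measurable_times_ennreal borel_measurable_const borel_measurable_indicator) by simp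
  also have "\<dots> = (\<Sum>k. ennreal (V * 2^n * (2 powr (real n - t))^k))"
  proof (rule suminf_cong)
    fix k
    have "(\<integral>\<^sup>+x. g k x \<partial>lborel) = ennreal (2 powr (-(real k)*t)) * emeasure lborel (ball (0::'a) (2^(Suc k)))"
      unfolding g_def by (rule nn_integral_cmult_indicator) simp
    also have "\<dots> = ennreal (2 powr (-(real k)*t) * (V * (2 ^ Suc k) ^ n))"
      by (simp add: emeasure_ball V_def n_def ennreal_mult)
    also have "2 powr (-(real k)*t) * (V * (2 ^ Suc k) ^ n) = V * 2^n * (2 powr (real n - t))^k"
    proof -
      have "((2::real) ^ Suc k) ^ n = 2 ^ (n + k * n)" by (simp add: power_mult[symmetric] power_add algebra_simps)
      also have "\<dots> = 2 powr (real n + real k * real n)" by (simp add: powr_realpow[symmetric])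
      finally have e1: "((2::real) ^ Suc k) ^ n = 2 powr (real n + real k * real n)" .
      have e2: "(2 powr (real n - t))^k = 2 powr ((real n - t) * real k)"
        by (simp add: powr_realpow[symmetric] powr_powr)
      have e3: "(2::real)^n = 2 powr real n" by (simp add: powr_realpow)
      have "2 powr (-(real k)*t) * (2::real) powr (real n + real k * real n) = 2 powr (real n) * 2 powr ((real n - t) * real k)"
        by (simp add: powr_add[symmetric] algebra_simps)
      thus ?thesis unfolding e1 e2 e3 by (simp add: algebra_simps)
    qed
    finally show "(\<integral>\<^sup>+x. g k x \<partial>lborel) = ennreal (V * 2^n * (2 powr (real n - t))^k)" .
  qed
  also have "\<dots> < \<infinity>"
  proof -
    have "summable (\<lambda>k. V * 2^n * (2 powr (real n - t))^k)"
      using t n_def powr_less_mono[of "real n - t" 0 2] by (intro summable_mult summable_geometric) auto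
    thus ?thesis using V
      by (simp add: ennreal_suminf_neq_top less_top[symmetric])
  qed
  finally show ?thesis .
qed

lemma coercive_lower:
  fixes \<phi> :: "'a::euclidean_space \<Rightarrow> ereal"
  assumes "coercive \<phi>"
  obtains c R where "c > 0" "R \<ge> 1" "\<And>x. norm x \<ge> R \<Longrightarrow> ereal (c * norm x) < \<phi> x"
proof -
  have "0 < Liminf at_infinity (\<lambda>x. \<phi> x / ereal (norm x))" using assms unfolding coercive_def .
  then obtain c where c0: "0 < ereal c" and cL: "ereal c < Liminf at_infinity (\<lambda>x. \<phi> x / ereal (norm x))"
    using ereal_dense2 by blast
  have "eventually (\<lambda>x. ereal c < \<phi> x / ereal (norm x)) at_infinity"
    using less_LiminfD[OF cL] .
  then obtain b where b: "\<And>x. b \<le> norm x \<Longrightarrow> ereal c < \<phi> x / ereal (norm x)"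
    unfolding eventually_at_infinity by blast
  define R where "R = max b 1"
  have "ereal (c * norm x) < \<phi> x" if "norm x \<ge> R" for x
  proof -
    have nx: "norm x > 0" "norm x \<ge> 1" using that unfolding R_def by auto
    have h: "ereal c < \<phi> x / ereal (norm x)" using b that unfolding R_def by auto
    show ?thesis
    proof (cases "\<phi> x")
      case (real r)
      with h nx have "c < r / norm x" by simp
      hence "c * norm x < r" using nx by (simp add: field_simps)
      thus ?thesis using real by simp
    next
      case PInf thus ?thesis by simp
    next
      case MInf thus ?thesis using h nx by simp
    qed
  qed
  moreover have "c > 0" using c0 by simp
  moreover have "R \<ge> 1" unfolding R_def by simp
  ultimately show ?thesis using that by blast
qed

lemma integrable_main:
  fixes \<alpha> s p :: real and \<phi> :: "'a::euclidean_space \<Rightarrow> ereal"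
  assumes a: "\<alpha> < 0" and ph: "\<phi> \<in> base_C_plus" and s: "s < 0" and p: "p \<ge> 0"
    and cond: "real DIM('a) + p + s < 0"
  shows "(\<integral>\<^sup>+x. ennreal ((1 + norm x) powr p * pow_base \<alpha> (\<phi> x) s) \<partial>lborel) < \<infinity>"
proof -
  have nonneg: "\<And>x. 0 \<le> \<phi> x" and co: "coercive \<phi>" using ph unfolding base_C_plus_def by auto
  obtain c R where c: "c > 0" and R: "R \<ge> 1" and cR: "\<And>x. norm x \<ge> R \<Longrightarrow> ereal (c * norm x) < \<phi> x"
    using coercive_lower[OF co] by blast
  define t where "t = - (p + s)"
  have t: "t > real DIM('a)" using cond unfolding t_def by simp
  define m where "m = min 1 ((-\<alpha>) * c)"
  have m: "m > 0" unfolding m_def using a c by (simp add: mult_neg_pos)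
  define K where "K = m powr s + (1 + R) powr (p + t)"
  have K: "K \<ge> 0" unfolding K_def by simp
  have pt: "(1 + norm x) powr p * pow_base \<alpha> (\<phi> x) s \<le> K * (1 + norm x) powr (-t)" for x
  proof (cases "\<phi> x = \<infinity>")
    case True thus ?thesis using K by (simp add: pow_base_def)
  next
    case False
    define v where "v = real_of_ereal (\<phi> x)"
    have ev: "\<phi> x = ereal v" using False nonneg[of x] unfolding v_def
      by (cases "\<phi> x") auto
    have v0: "v \<ge> 0" using nonneg[of x] ev by simp
    define u where "u = 1 - \<alpha> * v"
    have u1: "u \<ge> 1" unfolding u_def using a v0 by (simp add: mult_nonpos_nonneg)
    have pb: "pow_base \<alpha> (\<phi> x) s = u powr s" using False unfolding pow_base_def u_def v_def by simp
    have n1: "1 + norm x > 0" by (smt (verit) norm_ge_zero)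
    show ?thesis
    proof (cases "norm x \<ge> R")
      case True
      have "c * norm x < v" using cR[OF True] ev by simp
      hence "(-\<alpha>) * (c * norm x) \<le> (-\<alpha>) * v" using a by (intro mult_left_mono) auto
      hence "u \<ge> 1 + (-\<alpha>) * c * norm x" unfolding u_def by (simp add: algebra_simps)
      moreover have "(-\<alpha>) * c * norm x \<ge> m * norm x"
        unfolding m_def by (intro mult_right_mono) auto
      moreover have "1 \<ge> m" unfolding m_def by simp
      ultimately have um: "u \<ge> m * (1 + norm x)" by (simp add: algebra_simps)
      have "u powr s \<le> (m * (1 + norm x)) powr s"
        using um m n1 s by (intro powr_mono2') auto
      also have "\<dots> = m powr s * (1 + norm x) powr s"
        using m n1 by (simp add: powr_mult)
      finally have "(1 + norm x) powr p * u powr s \<le> (1 + norm x) powr p * (m powr s * (1 + norm x) powr s)"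
        by (intro mult_left_mono) auto
      also have "\<dots> = m powr s * (1 + norm x) powr (-t)"
        unfolding t_def using n1 by (simp add: powr_add[symmetric] algebra_simps)
      also have "\<dots> \<le> K * (1 + norm x) powr (-t)"
        unfolding K_def by (intro mult_right_mono) auto
      finally show ?thesis using pb by simp
    next
      case False
      have "u powr s \<le> 1"
      proof -
        have "1 \<le> u powr (-s)" using u1 s by (intro ge_one_powr_ge_zero) auto
        thus ?thesis using u1 by (simp add: powr_minus_divide divide_le_eq powr_minus)
      qed
      hence "(1 + norm x) powr p * u powr s \<le> (1 + norm x) powr p"
        by (simp add: mult_left_le)
      also have "\<dots> \<le> (1 + R) powr p" using False p by (intro powr_mono2) auto
      also have "\<dots> = (1 + R) powr (p + t) * (1 + R) powr (-t)"
        using R by (simp add: powr_add[symmetric])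
      also have "\<dots> \<le> (1 + R) powr (p + t) * (1 + norm x) powr (-t)"
        using False t n1 by (intro mult_left_mono powr_mono2') auto
      also have "\<dots> \<le> K * (1 + norm x) powr (-t)"
        unfolding K_def by (intro mult_right_mono) auto
      finally show ?thesis using pb by simp
    qed
  qed
  have "(\<integral>\<^sup>+x. ennreal ((1 + norm x) powr p * pow_base \<alpha> (\<phi> x) s) \<partial>lborel)
      \<le> (\<integral>\<^sup>+x. ennreal K * ennreal ((1 + norm (x::'a)) powr (-t)) \<partial>lborel)"
    by (intro nn_integral_mono) (simp add: pt K ennreal_mult[symmetric] ennreal_leI)
  also have "\<dots> = ennreal K * (\<integral>\<^sup>+x. ennreal ((1 + norm (x::'a)) powr (-t)) \<partial>lborel)"
    by (rule nn_integral_cmult) measurable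
  also have "\<dots> < \<infinity>"
    using integrable_tail[OF t] by (simp add: ennreal_mult_less_top)
  finally show ?thesis .
qed

theorem lemma2p2:
  fixes \<alpha> :: real and \<phi> :: "'n::euclidean_space \<Rightarrow> ereal"
  assumes "\<alpha> < 0"
    and "\<phi> \<in> base_C_plus"
  shows "(\<forall>(l::real) (p::real).
           0 \<le> l \<and> l < real DIM('n) \<and> 0 \<le> p \<and> - 1 / (real DIM('n) - l + p) < \<alpha> \<longrightarrow>
           (\<integral>\<^sup>+ x. ennreal (norm x powr p * pow_base \<alpha> (\<phi> x) (1 / \<alpha> - l)) \<partial>lborel) < \<infinity>) \<and>
         (- 1 / real DIM('n) < \<alpha> \<longrightarrow>
           (\<integral>\<^sup>+ x. ennreal (f_alpha \<alpha> \<phi> x) \<partial>lborel) < \<infinity> \<and>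
           (\<integral>\<^sup>+ x. ennreal (f_alpha \<alpha> \<phi> x powr (1 - \<alpha>)) \<partial>lborel) < \<infinity>)"
proof (intro conjI allI impI)
  have pbn: "pow_base \<alpha> v s \<ge> 0" for v s unfolding pow_base_def by simp
  have ia: "1 / \<alpha> < 0" using assms(1) by simp
  fix l p :: real
  assume H: "0 \<le> l \<and> l < real DIM('n) \<and> 0 \<le> p \<and> - 1 / (real DIM('n) - l + p) < \<alpha>"
  define D where "D = real DIM('n) - l + p"
  have D: "D > 0" using H unfolding D_def by simp
  have "D * (-1/D) < D * \<alpha>" using H D by (intro mult_strict_left_mono) (auto simp: D_def)
  hence m1: "-1 < D * \<alpha>" using D by simp
  have "D < - 1 / \<alpha>"
  proof (rule ccontr)
    assume "\<not> D < - 1 / \<alpha>"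
    hence "D * \<alpha> \<le> (-1/\<alpha>) * \<alpha>" using assms(1) by (intro mult_right_mono_neg) auto
    thus False using m1 assms(1) by simp
  qed
  hence cond: "real DIM('n) + p + (1 / \<alpha> - l) < 0" unfolding D_def by simp
  have "(\<integral>\<^sup>+ x. ennreal (norm x powr p * pow_base \<alpha> (\<phi> x) (1 / \<alpha> - l)) \<partial>lborel)
     \<le> (\<integral>\<^sup>+ x. ennreal ((1 + norm x) powr p * pow_base \<alpha> (\<phi> x) (1 / \<alpha> - l)) \<partial>lborel)"
    using H pbn by (intro nn_integral_mono ennreal_leI mult_right_mono powr_mono2) auto
  also have "\<dots> < \<infinity>"
    using H ia cond by (intro integrable_main[OF assms]) auto
  finally show "(\<integral>\<^sup>+ x. ennreal (norm x powr p * pow_base \<alpha> (\<phi> x) (1 / \<alpha> - l)) \<partial>lborel) < \<infinity>" .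
next
  have pbn: "pow_base \<alpha> v s \<ge> 0" for v s unfolding pow_base_def by simp
  have ia: "1 / \<alpha> < 0" using assms(1) by simp
  assume H: "- 1 / real DIM('n) < \<alpha>"
  have n0: "real DIM('n) > 0" by simp
  have "real DIM('n) * (-1/real DIM('n)) < real DIM('n) * \<alpha>" using H n0 by (intro mult_strict_left_mono) auto
  hence m1: "-1 < real DIM('n) * \<alpha>" using n0 by simp
  have cond: "real DIM('n) < - 1 / \<alpha>"
  proof (rule ccontr)
    assume "\<not> real DIM('n) < - 1 / \<alpha>"
    hence "real DIM('n) * \<alpha> \<le> (-1/\<alpha>) * \<alpha>" using assms(1) by (intro mult_right_mono_neg) auto
    thus False using m1 assms(1) by simp
  qed
  have "(\<integral>\<^sup>+ x. ennreal (f_alpha \<alpha> \<phi> x) \<partial>lborel)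
     = (\<integral>\<^sup>+ x. ennreal ((1 + norm x) powr 0 * pow_base \<alpha> (\<phi> x) (1 / \<alpha>)) \<partial>lborel)"
  proof (rule nn_integral_cong)
    fix x :: 'n
    have "1 + norm x \<noteq> 0" by (smt (verit) norm_ge_zero)
    thus "ennreal (f_alpha \<alpha> \<phi> x) = ennreal ((1 + norm x) powr 0 * pow_base \<alpha> (\<phi> x) (1 / \<alpha>))"
      by (simp add: f_alpha_def)
  qed
  also have "\<dots> < \<infinity>"
    using ia cond by (intro integrable_main[OF assms]) auto
  finally show "(\<integral>\<^sup>+ x. ennreal (f_alpha \<alpha> \<phi> x) \<partial>lborel) < \<infinity>" .
  have "(\<integral>\<^sup>+ x. ennreal (f_alpha \<alpha> \<phi> x powr (1 - \<alpha>)) \<partial>lborel)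
     = (\<integral>\<^sup>+ x. ennreal ((1 + norm x) powr 0 * pow_base \<alpha> (\<phi> x) (1 / \<alpha> - 1)) \<partial>lborel)"
  proof (rule nn_integral_cong)
    fix x :: 'n
    have "1 + norm x \<noteq> 0" by (smt (verit) norm_ge_zero)
    moreover have "f_alpha \<alpha> \<phi> x powr (1 - \<alpha>) = pow_base \<alpha> (\<phi> x) (1 / \<alpha> - 1)"
    proof (cases "\<phi> x = \<infinity>")
      case True thus ?thesis by (simp add: f_alpha_def pow_base_def)
    next
      case False
      have "(1 / \<alpha>) * (1 - \<alpha>) = 1 / \<alpha> - 1" using assms(1) by (simp add: field_simps)
      thus ?thesis using False by (simp add: f_alpha_def pow_base_def powr_powr)
    qed
    ultimately show "ennreal (f_alpha \<alpha> \<phi> x powr (1 - \<alpha>)) = ennreal ((1 + norm x) powr 0 * pow_base \<alpha> (\<phi> x) (1 / \<alpha> - 1))"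
      by simp
  qed
  also have "\<dots> < \<infinity>"
    using ia cond by (intro integrable_main[OF assms]) auto
  finally show "(\<integral>\<^sup>+ x. ennreal (f_alpha \<alpha> \<phi> x powr (1 - \<alpha>)) \<partial>lborel) < \<infinity>" .
qed

end
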